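(* Let $X$ be a real Hausdorff locally convex topological vector space, let $f:X\to\overline{\mathbb R}$ be proper, convex and lower semicontinuous, and let $U\subseteq\operatorname{dom} f$ be segment-dense in $\operatorname{dom} f$. Then $f=\overline{f_U}$ on $X$ and $\inf_{x\in U}f(x)=\inf_{x\in X}f(x)$.
   Context: $\overline{\mathbb R}=\mathbb R\cup\{\pm\infty\}$; $\operatorname{dom} f=\{x:f(x)<+\infty\}$; proper: $\operatorname{dom} f\ne\emptyset$ and $f>-\infty$. $\operatorname{epi} f_U=\{(u,r)\in U\times\mathbb R:f(u)\le r\}$ and $\overline{f_U}:X\to\overline{\mathbb R}$ is the function whose epigraph is $\operatorname{cl}(\operatorname{epi} f_U)$ in $X\times\mathbb R$, i.e. $\overline{f_U}(x)=\inf\{r:(x,r)\in\operatorname{cl}(\operatorname{epi} f_U)\}$ ($\inf\emptyset=+\infty$). $[x,y]=\{x+t(y-x):t\in[0,1]\}$. Segment-dense: for convex $V$ and $U\subseteq V$, $U$ is segment-dense in $V$ if for each $x\in V$ there exists $y\in U$ such that $x$ is a cluster point of $[x,y]\cap U$. *)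

theory Defs
  imports "HOL-Analysis.Analysis"
begin

definition lc_tvs :: "'a::{real_vector,t2_space} itself \<Rightarrow> bool" where
  "lc_tvs _ \<longleftrightarrow>
     continuous_on UNIV (\<lambda>p::'a \<times> 'a. fst p + snd p) \<and>
     continuous_on UNIV (\<lambda>p::real \<times> 'a. fst p *\<^sub>R snd p) \<and>
     (\<forall>(x::'a) W. open W \<and> x \<in> W \<longrightarrow> (\<exists>V. open V \<and> convex V \<and> x \<in> V \<and> V \<subseteq> W))"

definition edom :: "('a \<Rightarrow> ereal) \<Rightarrow> 'a set" where
  "edom f = {x. f x < \<infinity>}"

definition proper_fun :: "('a \<Rightarrow> ereal) \<Rightarrow> bool" where
  "proper_fun f \<longleftrightarrow> edom f \<noteq> {} \<and> (\<forall>x. f x > -\<infinity>)"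

definition epi_on :: "('a \<Rightarrow> ereal) \<Rightarrow> 'a set \<Rightarrow> ('a \<times> real) set" where
  "epi_on f U = {(u, r). u \<in> U \<and> f u \<le> ereal r}"

definition econvex :: "('a::real_vector \<Rightarrow> ereal) \<Rightarrow> bool" where
  "econvex f \<longleftrightarrow> convex (epi_on f UNIV)"

definition elsc :: "('a::topological_space \<Rightarrow> ereal) \<Rightarrow> bool" where
  "elsc f \<longleftrightarrow> (\<forall>c. closed {x. f x \<le> c})"

text \<open>The function whose epigraph is the closure of epi f_U in X \<times> \<real>.\<close>
definition closure_fun :: "('a::topological_space \<Rightarrow> ereal) \<Rightarrow> 'a set \<Rightarrow> 'a \<Rightarrow> ereal" where
  "closure_fun f U x = Inf {ereal r | r. (x, r) \<in> closure (epi_on f U)}"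

definition segment_dense :: "'a::{real_vector,topological_space} set \<Rightarrow> 'a set \<Rightarrow> bool" where
  "segment_dense U V \<longleftrightarrow> U \<subseteq> V \<and>
     (\<forall>x\<in>V. \<exists>y\<in>U. x islimpt (closed_segment x y \<inter> U))"

end

theory Submission
  imports Defs
begin

lemma seg_cont:
  fixes x y :: "'a::{real_vector,t2_space}"
  assumes "lc_tvs TYPE('a)"
  shows "continuous_on S (\<lambda>t::real. (1-t) *\<^sub>R x + t *\<^sub>R y)"
proof -
  have A: "continuous_on UNIV (\<lambda>p::'a \<times> 'a. fst p + snd p)"
   and M: "continuous_on UNIV (\<lambda>p::real \<times> 'a. fst p *\<^sub>R snd p)"
    using assms unfolding lc_tvs_def by auto
  have c1: "continuous_on UNIV (\<lambda>t::real. (\<lambda>p::real \<times> 'a. fst p *\<^sub>R snd p) (1-t, x))"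
    by (rule continuous_on_compose[of UNIV "\<lambda>t. (1-t, x)", unfolded o_def])
       (auto intro!: continuous_intros continuous_on_subset[OF M])
  have c2: "continuous_on UNIV (\<lambda>t::real. (\<lambda>p::real \<times> 'a. fst p *\<^sub>R snd p) (t, y))"
    by (rule continuous_on_compose[of UNIV "\<lambda>t. (t, y)", unfolded o_def])
       (auto intro!: continuous_intros continuous_on_subset[OF M])
  have "continuous_on UNIV (\<lambda>t::real. (\<lambda>p::'a \<times> 'a. fst p + snd p) ((1-t) *\<^sub>R x, t *\<^sub>R y))"
    by (rule continuous_on_compose[of UNIV "\<lambda>t. ((1-t) *\<^sub>R x, t *\<^sub>R y)", unfolded o_def])
       (use c1 c2 in \<open>auto intro!: continuous_on_Pair continuous_on_subset[OF A]\<close>)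
  then show ?thesis by (auto intro: continuous_on_subset)
qed

lemma key:
  fixes f :: "'a::{real_vector,t2_space} \<Rightarrow> ereal" and U :: "'a set"
  assumes "lc_tvs TYPE('a)"
    and "proper_fun f" and "econvex f"
    and "U \<subseteq> edom f" and "segment_dense U (edom f)"
    and fx: "f x = ereal a" and ar: "a < r" and A: "open A" "x \<in> A"
  shows "\<exists>z\<in>U \<inter> A. f z \<le> ereal r"
proof -
  have xd: "x \<in> edom f" using fx unfolding edom_def by auto
  obtain y where yU: "y \<in> U" and lim: "x islimpt (closed_segment x y \<inter> U)"
    using assms(5) xd unfolding segment_dense_def by auto
  have "f y < \<infinity>" using yU assms(4) unfolding edom_def by auto
  moreover have "f y > -\<infinity>" using assms(2) unfolding proper_fun_def by auto
  ultimately obtain b where fy: "f y = ereal b" by (cases "f y") auto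
  have yx: "y \<noteq> x"
  proof
    assume "y = x"
    then have "closed_segment x y \<inter> U \<subseteq> {x}" by auto
    then have "x islimpt {x}" using lim islimpt_subset by blast
    then show False unfolding islimpt_def using open_UNIV by blast
  qed
  define \<delta> where "\<delta> = min 1 ((r-a)/(\<bar>b-a\<bar>+1))"
  have dpos: "\<delta> > 0" using ar unfolding \<delta>_def by auto
  have d1: "\<delta> \<le> 1" unfolding \<delta>_def by auto
  have bound: "(1-t)*a + t*b \<le> r" if "0 \<le> t" "t \<le> \<delta>" for t
  proof -
    have "t \<le> (r-a)/(\<bar>b-a\<bar>+1)" using that unfolding \<delta>_def by auto
    then have "t * (\<bar>b-a\<bar>+1) \<le> r - a" by (simp add: pos_le_divide_eq)
    moreover have "t*(b-a) \<le> t * (\<bar>b-a\<bar>+1)" using that by (intro mult_left_mono) auto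
    ultimately show ?thesis by (simp add: algebra_simps)
  qed
  define g where "g = (\<lambda>t::real. (1-t) *\<^sub>R x + t *\<^sub>R y)"
  define K where "K = g ` {\<delta>..1}"
  have "compact K" unfolding K_def g_def
    by (intro compact_continuous_image seg_cont assms(1)) auto
  then have cK: "closed K" by (rule compact_imp_closed)
  have geq: "g t = x + t *\<^sub>R (y - x)" for t unfolding g_def by (simp add: algebra_simps)
  have xK: "x \<notin> K"
  proof
    assume "x \<in> K"
    then obtain t where "t \<ge> \<delta>" "g t = x" unfolding K_def by auto
    then have "t *\<^sub>R (y - x) = 0" using geq by simp
    then have "t = 0 \<or> y - x = 0" by simp
    with yx dpos \<open>t \<ge> \<delta>\<close> show False by simp
  qed
  have "open (A \<inter> - K)" using A cK by auto
  moreover have "x \<in> A \<inter> - K" using A xK by auto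
  ultimately obtain z where z: "z \<in> closed_segment x y \<inter> U" "z \<in> A \<inter> - K" "z \<noteq> x"
    using lim[unfolded islimpt_def, rule_format, of "A \<inter> - K"] by blast
  obtain t where t: "0 \<le> t" "t \<le> 1" "z = g t"
    using z(1) unfolding closed_segment_def g_def by auto
  have "t < \<delta>"
  proof (rule ccontr)
    assume "\<not> t < \<delta>"
    then have "z \<in> K" unfolding K_def using t by auto
    with z show False by auto
  qed
  have ex: "(x, a) \<in> epi_on f UNIV" "(y, b) \<in> epi_on f UNIV"
    using fx fy unfolding epi_on_def by auto
  have "(1-t) *\<^sub>R (x,a) + t *\<^sub>R (y,b) \<in> epi_on f UNIV"
    using assms(3) ex t unfolding econvex_def by (intro convexD) auto
  then have "f z \<le> ereal ((1-t)*a + t*b)"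
    using t unfolding epi_on_def g_def by simp
  also have "\<dots> \<le> ereal r" using bound[of t] t \<open>t < \<delta>\<close> by auto
  finally show ?thesis using z by auto
qed

lemma epi_closed:
  fixes f :: "'a::topological_space \<Rightarrow> ereal"
  assumes "elsc f"
  shows "closed (epi_on f UNIV)"
  unfolding closed_def
proof (rule Topological_Spaces.openI)
  fix p assume "p \<in> - epi_on f UNIV"
  then obtain u s where p: "p = (u,s)" and fu: "f u > ereal s"
    unfolding epi_on_def by (cases p) auto
  obtain c where c: "ereal s < c" "c < f u" using ereal_dense2[OF fu] by blast
  then obtain cr where cr: "c = ereal cr" "s < cr"
    by (cases c) auto
  have o1: "open {v. \<not> f v \<le> ereal cr}"
    using assms unfolding elsc_def closed_def by (simp add: Collect_neg_eq)
  let ?T = "{v. \<not> f v \<le> ereal cr} \<times> {..<cr}"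
  have "open ?T" using o1 by (intro open_Times) auto
  moreover have "p \<in> ?T" using p c cr by auto
  moreover have "?T \<subseteq> - epi_on f UNIV" unfolding epi_on_def
  proof (clarsimp simp: not_le)
    fix v w assume "ereal cr < f v" "w < cr" "f v \<le> ereal w"
    then show False by (metis ereal_less_eq(3) less_le_trans linorder_not_less order_less_imp_le)
  qed
  ultimately show "\<exists>T. open T \<and> p \<in> T \<and> T \<subseteq> - epi_on f UNIV" by blast
qed

theorem mainTheorem7:
  fixes f :: "'a::{real_vector,t2_space} \<Rightarrow> ereal" and U :: "'a set"
  assumes "lc_tvs TYPE('a)"
    and "proper_fun f" and "econvex f" and "elsc f"
    and "U \<subseteq> edom f" and "segment_dense U (edom f)"
  shows "(\<forall>x. f x = closure_fun f U x) \<and> (INF x\<in>U. f x) = (INF x. f x)"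
proof -
  have fin: "f x = \<infinity> \<or> (\<exists>a. f x = ereal a)" for x
    using assms(2) unfolding proper_fun_def by (cases "f x") auto
  have cl: "closure (epi_on f U) \<subseteq> epi_on f UNIV"
    by (rule closure_minimal[OF _ epi_closed[OF assms(4)]]) (auto simp: epi_on_def)
  have P1: "f x = closure_fun f U x" for x
  proof (rule antisym)
    show "f x \<le> closure_fun f U x" unfolding closure_fun_def
    proof (rule Inf_greatest)
      fix v assume "v \<in> {ereal r |r. (x, r) \<in> closure (epi_on f U)}"
      then obtain r where "v = ereal r" "(x, r) \<in> closure (epi_on f U)" by blast
      then have "(x, r) \<in> epi_on f UNIV" using cl by blast
      then show "f x \<le> v" using \<open>v = ereal r\<close> unfolding epi_on_def by simp
    qed
  next
    show "closure_fun f U x \<le> f x"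
    proof (cases "f x = \<infinity>")
      case True then show ?thesis by simp
    next
      case False
      then obtain a where fx: "f x = ereal a" using fin by blast
      have mem: "(x, r) \<in> closure (epi_on f U)" if ar: "a < r" for r
        unfolding closure_iff_nhds_not_empty
      proof (intro allI impI)
        fix W S assume SW: "S \<subseteq> W" "open S" "(x, r) \<in> S"
        obtain A B where AB: "open A" "open B" "x \<in> A" "r \<in> B" "A \<times> B \<subseteq> S"
          using open_prod_elim[OF SW(2,3)] mem_Times_iff by (metis fst_conv snd_conv)
        obtain z where "z \<in> U \<inter> A" "f z \<le> ereal r"
          using key[OF assms(1,2,3,5,6) fx ar AB(1,3)] by blast
        moreover have "(z, r) \<in> W" using AB SW \<open>z \<in> U \<inter> A\<close> by blast
        ultimately have "(z, r) \<in> epi_on f U \<inter> W" unfolding epi_on_def by simp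
        then show "epi_on f U \<inter> W \<noteq> {}" by blast
      qed
      show ?thesis unfolding fx closure_fun_def
      proof (rule ereal_le_epsilon2)
        fix e :: real assume "0 < e"
        then have "(x, a + e) \<in> closure (epi_on f U)" using mem by auto
        then have "Inf {ereal r |r. (x, r) \<in> closure (epi_on f U)} \<le> ereal (a + e)"
          by (intro Inf_lower CollectI exI conjI) simp_all
        then show "Inf {ereal r |r. (x, r) \<in> closure (epi_on f U)} \<le> ereal a + ereal e" by simp
      qed
    qed
  qed
  have P2: "(INF x\<in>U. f x) = (INF x. f x)"
  proof (rule antisym)
    show "(INF x\<in>U. f x) \<le> (INF x. f x)"
    proof (rule INF_greatest)
      fix x
      show "(INF x\<in>U. f x) \<le> f x"
      proof (cases "f x = \<infinity>")
        case True then show ?thesis by simp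
      next
        case False
        then obtain a where fx: "f x = ereal a" using fin by blast
        show ?thesis unfolding fx
        proof (rule ereal_le_epsilon2)
          fix e :: real assume "0 < e"
          then obtain z where "z \<in> U" "f z \<le> ereal (a+e)"
            using key[OF assms(1,2,3,5,6) fx, of "a+e" UNIV] by auto
          then have "(INF x\<in>U. f x) \<le> ereal (a + e)" by (rule INF_lower2)
          then show "(INF x\<in>U. f x) \<le> ereal a + ereal e" by simp
        qed
      qed
    qed
  next
    show "(INF x. f x) \<le> (INF x\<in>U. f x)" by (rule INF_superset_mono) simp_all
  qed
  show ?thesis using P1 P2 by blast
qed

end
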